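(* Let $M=(\mathbf{D},\mathbf{I},\Sigma,\sim)$ be a model, $\sigma_1\in\Sigma$, $\alpha\in\mathcal{L}_{\mathsf{B}}$ and $z\in\{x,y\}$. Then $$M,\sigma_1\models \bigwedge_{\mathcal{T}\subseteq Cons}\Big(Rz=\mathcal{T}\to \bigwedge_{c\in \mathcal{T}}\alpha[c/z]\Big)$$ iff for all $\sigma_2\in\mathsf{R}^z(\sigma_1)$, $M',\sigma_2\models\alpha$, where $M'=(\mathbf{D},\mathbf{I},\Sigma',\sim')$ is the update of $M$ associated to $\sigma_2$ induced by $[z]$.
   Context: Vocabulary: $Pred$ set of predicate symbols with arities containing a binary symbol $R$; $Cons$ nonempty finite set of constants; $Var=\{x,y\}$; terms are elements of $Cons\cup Var$. $\mathcal{L}_{\mathsf{B}}$: $\alpha::=P(t_1,\dots,t_m)\mid t_1\equiv t_2\mid\neg\alpha\mid(\alpha\land\alpha)$. $\alpha[c/z]$ is the result of replacing every occurrence of $z$ in $\alpha$ by $c$. For $\mathcal{T}\subseteq Cons$ and a term $u$, $Ru=\mathcal{T}:=\bigwedge_{t\in\mathcal{T}}Rut\land\bigwedge_{t\in Cons\setminus\mathcal{T}}\neg Rut$. A model is $M=(\mathbf{D},\mathbf{I},\Sigma,\sim)$: $\mathbf{D}$ nonempty finite; $\mathbf{I}(P)\subseteq\mathbf{D}^m$ for $m$-ary $P$, with $\mathbf{R}:=\mathbf{I}(R)$ serial; $\mathbf{I}(c)\in\mathbf{D}$ for $c\in Cons$, every element of $\mathbf{D}$ being some $\mathbf{I}(c)$;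 $\Sigma\subseteq\mathbf{D}^{Var}$ nonempty set of assignments (situations); $\sim_x,\sim_y$ equivalence relations on $\Sigma$. Semantics of $\mathcal{L}_{\mathsf{B}}$: with $t^{(\mathbf{I},\sigma)}=\mathbf{I}(t)$ for constants, $\sigma(t)$ for variables, $M,\sigma\models P(t_1,\dots,t_m)$ iff $(t_1^{(\mathbf{I},\sigma)},\dots,t_m^{(\mathbf{I},\sigma)})\in\mathbf{I}(P)$, $M,\sigma\models t_1\equiv t_2$ iff the values are equal, Boolean clauses standard. Fix a natural number $k$ (the sight). For $s\in\mathbf{D}$: $\mathbb{D}^0(s)=\{s\}$, $\mathbb{D}^{m+1}(s)=\mathbb{D}^m(s)\cup\{t:\exists u\in\mathbb{D}^m(s),(u,t)\in\mathbf{R}\text{ or }(t,u)\in\mathbf{R}\}$. For $\sigma,\sigma'\in\mathbf{D}^{Var}$, $\mathsf{R}^z\sigma\sigma'$ iff $(\sigma(z),\sigma'(z))\in\mathbf{R}$ and $\sigma(z')=\sigma'(z')$ for the other variable $z'$; $\mathsf{R}^z(\Gamma)=\{\sigma':\exists\sigma\in\Gamma,\mathsf{R}^z\sigma\sigma'\}$, $\mathsf{R}^z(\sigma)=\mathsf{R}^z(\{\sigma\})$; $\Sigma|\sigma=\{\sigma'\in\Sigma:\sigma\sim_w\sigma'\text{ for some }w\in Var\}$. For $\sigma_2\in\mathsf{R}^z(\sigma_1)$, the update of $M$ associated to $\sigma_2$ induced by $[z]$ is $(\mathbf{D},\mathbf{I},\Sigma',\sim')$ with $\Sigma'=\{\sigma_2\}$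 if $\sigma_2(x)\in\mathbb{D}^k(\sigma_2(y))$, and otherwise $\Sigma'=\{\sigma'\in\mathsf{R}^z(\Sigma|\sigma_1):\sigma'(x)\notin\mathbb{D}^k(\sigma'(y))\}$; and $\sigma'_1\sim'_w\sigma'_2$ iff $\sigma'_1(w)=\sigma'_2(w)$, for $w\in Var$. *)

theory Defs
  imports Main
begin

datatype var = X | Y

datatype 'c trm = Con 'c | Vr var

datatype ('p, 'c) fm =
    Atom 'p "'c trm list"
  | Eq "'c trm" "'c trm"
  | Neg "('p, 'c) fm"
  | Conj "('p, 'c) fm" "('p, 'c) fm"

type_synonym 'd asg = "var \<Rightarrow> 'd"

text \<open>Models.  The set Cons of constants is the (finite, nonempty) type 'c.\<close>
record ('p, 'c, 'd) model =
  Dom :: "'d set"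
  IP  :: "'p \<Rightarrow> 'd list set"
  IC  :: "'c \<Rightarrow> 'd"
  Sig :: "'d asg set"
  sim :: "var \<Rightarrow> ('d asg \<times> 'd asg) set"

definition Rrel :: "'p \<Rightarrow> ('p, 'c, 'd) model \<Rightarrow> ('d \<times> 'd) set" where
  "Rrel R M = {(a, b). [a, b] \<in> IP M R}"

definition is_model ::
  "('p \<Rightarrow> nat) \<Rightarrow> 'p \<Rightarrow> ('p, 'c::finite, 'd) model \<Rightarrow> bool" where
  "is_model ar R M \<longleftrightarrow>
     ar R = 2 \<and>
     finite (Dom M) \<and> Dom M \<noteq> {} \<and>
     (\<forall>P. \<forall>ds \<in> IP M P. length ds = ar P \<and> set ds \<subseteq> Dom M) \<and>
     (\<forall>a \<in> Dom M. \<exists>b. (a, b) \<in> Rrel R M) \<and>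
     (\<forall>c. IC M c \<in> Dom M) \<and>
     Dom M = range (IC M) \<and>
     Sig M \<noteq> {} \<and> (\<forall>\<sigma> \<in> Sig M. \<forall>v. \<sigma> v \<in> Dom M) \<and>
     (\<forall>w. equiv (Sig M) (sim M w))"

fun wf :: "('p \<Rightarrow> nat) \<Rightarrow> ('p, 'c) fm \<Rightarrow> bool" where
  "wf ar (Atom P ts) = (length ts = ar P)"
| "wf ar (Eq t u) = True"
| "wf ar (Neg a) = wf ar a"
| "wf ar (Conj a b) = (wf ar a \<and> wf ar b)"

fun evalt :: "('p, 'c, 'd) model \<Rightarrow> 'd asg \<Rightarrow> 'c trm \<Rightarrow> 'd" where
  "evalt M \<sigma> (Con c) = IC M c"
| "evalt M \<sigma> (Vr v) = \<sigma> v"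

fun sat :: "('p, 'c, 'd) model \<Rightarrow> 'd asg \<Rightarrow> ('p, 'c) fm \<Rightarrow> bool" where
  "sat M \<sigma> (Atom P ts) = (map (evalt M \<sigma>) ts \<in> IP M P)"
| "sat M \<sigma> (Eq t u) = (evalt M \<sigma> t = evalt M \<sigma> u)"
| "sat M \<sigma> (Neg a) = (\<not> sat M \<sigma> a)"
| "sat M \<sigma> (Conj a b) = (sat M \<sigma> a \<and> sat M \<sigma> b)"

definition Imp :: "('p, 'c) fm \<Rightarrow> ('p, 'c) fm \<Rightarrow> ('p, 'c) fm" where
  "Imp a b = Neg (Conj a (Neg b))"

definition Top :: "('p, 'c) fm" where
  "Top = Eq (Vr X) (Vr X)"

fun conjs :: "('p, 'c) fm list \<Rightarrow> ('p, 'c) fm" where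
  "conjs [] = Top"
| "conjs (a # as) = Conj a (conjs as)"

definition BigConj :: "('p, 'c) fm set \<Rightarrow> ('p, 'c) fm" where
  "BigConj S = conjs (SOME xs. set xs = S)"

fun substt :: "var \<Rightarrow> 'c \<Rightarrow> 'c trm \<Rightarrow> 'c trm" where
  "substt z c (Con d) = Con d"
| "substt z c (Vr v) = (if v = z then Con c else Vr v)"

fun subst :: "var \<Rightarrow> 'c \<Rightarrow> ('p, 'c) fm \<Rightarrow> ('p, 'c) fm" where
  "subst z c (Atom P ts) = Atom P (map (substt z c) ts)"
| "subst z c (Eq t u) = Eq (substt z c t) (substt z c u)"
| "subst z c (Neg a) = Neg (subst z c a)"
| "subst z c (Conj a b) = Conj (subst z c a) (subst z c b)"

definition Req :: "'p \<Rightarrow> 'c trm \<Rightarrow> 'c::finite set \<Rightarrow> ('p, 'c) fm" where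
  "Req R u T = Conj (BigConj {Atom R [u, Con t] | t. t \<in> T})
                    (BigConj {Neg (Atom R [u, Con t]) | t. t \<notin> T})"

fun Dk :: "'p \<Rightarrow> ('p, 'c, 'd) model \<Rightarrow> nat \<Rightarrow> 'd \<Rightarrow> 'd set" where
  "Dk R M 0 s = {s}"
| "Dk R M (Suc m) s = Dk R M m s \<union>
     {t. \<exists>u \<in> Dk R M m s. (u, t) \<in> Rrel R M \<or> (t, u) \<in> Rrel R M}"

definition other :: "var \<Rightarrow> var" where
  "other z = (if z = X then Y else X)"

definition Rz :: "'p \<Rightarrow> ('p, 'c, 'd) model \<Rightarrow> var \<Rightarrow> 'd asg set \<Rightarrow> 'd asg set" where
  "Rz R M z \<Gamma> = {\<sigma>'. \<exists>\<sigma> \<in> \<Gamma>. (\<sigma> z, \<sigma>' z) \<in> Rrel R M \<and> \<sigma> (other z) = \<sigma>' (other z)}"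

definition restr :: "('p, 'c, 'd) model \<Rightarrow> 'd asg \<Rightarrow> 'd asg set" where
  "restr M \<sigma> = {\<sigma>' \<in> Sig M. \<exists>w. (\<sigma>, \<sigma>') \<in> sim M w}"

definition upd :: "'p \<Rightarrow> nat \<Rightarrow> var \<Rightarrow> 'd asg \<Rightarrow> 'd asg \<Rightarrow>
                   ('p, 'c, 'd) model \<Rightarrow> ('p, 'c, 'd) model" where
  "upd R k z \<sigma>1 \<sigma>2 M =
     (let S' = (if \<sigma>2 X \<in> Dk R M k (\<sigma>2 Y) then {\<sigma>2}
                else {\<sigma>' \<in> Rz R M z (restr M \<sigma>1). \<sigma>' X \<notin> Dk R M k (\<sigma>' Y)})
      in M\<lparr>Sig := S', sim := (\<lambda>w. {(a, b). a \<in> S' \<and> b \<in> S' \<and> a w = b w})\<rparr>)"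

end

theory Submission
  imports Defs
begin

lemma sat_conjs: "sat M \<sigma> (conjs xs) = (\<forall>\<phi>\<in>set xs. sat M \<sigma> \<phi>)"
  by (induct xs) (auto simp: Top_def)

lemma sat_BigConj: "finite S \<Longrightarrow> sat M \<sigma> (BigConj S) = (\<forall>\<phi>\<in>S. sat M \<sigma> \<phi>)"
proof -
  assume "finite S"
  then have "\<exists>xs. set xs = S" by (rule finite_list)
  then have "set (SOME xs. set xs = S) = S" by (rule someI_ex)
  then show ?thesis unfolding BigConj_def sat_conjs by simp
qed

lemma evalt_subst: "evalt M \<sigma> (substt z c t) = evalt M (\<sigma>(z := IC M c)) t"
  by (cases t) (auto simp: fun_upd_def)

lemma sat_subst: "sat M \<sigma> (subst z c \<alpha>) = sat M (\<sigma>(z := IC M c)) \<alpha>"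
  by (induct \<alpha>) (auto simp: evalt_subst comp_def fun_upd_def)

lemma evalt_same: "IC M' = IC M \<Longrightarrow> evalt M' = evalt M"
  by (intro ext, rename_tac \<sigma> t, case_tac t) auto

lemma sat_same:
  assumes "IP M' = IP M" "IC M' = IC M" shows "sat M' \<sigma> \<alpha> = sat M \<sigma> \<alpha>"
proof -
  have e: "evalt M' = evalt M" using assms(2) by (rule evalt_same)
  show ?thesis by (induct \<alpha>) (simp_all add: e assms(1))
qed

lemma sat_upd: "sat (upd R k z \<sigma>1 \<sigma>2 M) \<sigma> \<alpha> = sat M \<sigma> \<alpha>"
  by (rule sat_same) (simp_all add: upd_def Let_def)

theorem fact5:
  fixes M :: "('p, 'c::finite, 'd) model"
    and ar :: "'p \<Rightarrow> nat" and R :: 'p and k :: nat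
    and \<sigma>1 :: "'d asg" and \<alpha> :: "('p, 'c) fm" and z :: var
  assumes "is_model ar R M"
    and "\<sigma>1 \<in> Sig M"
    and "wf ar \<alpha>"
  shows "sat M \<sigma>1 (BigConj {Imp (Req R (Vr z) T) (BigConj {subst z c \<alpha> | c. c \<in> T}) | T. T \<subseteq> UNIV})
     \<longleftrightarrow> (\<forall>\<sigma>2 \<in> Rz R M z {\<sigma>1}. sat (upd R k z \<sigma>1 \<sigma>2 M) \<sigma>2 \<alpha>)"
proof -
  have fin: "finite (A :: 'x set)" if "A \<subseteq> f ` (UNIV :: 'c set)" for A and f :: "'c \<Rightarrow> 'x"
    using finite_surj[OF finite_UNIV that] .
  have fin2: "finite {Imp (Req R (Vr z) T) (BigConj {subst z c \<alpha> | c. c \<in> T}) | T. T \<subseteq> (UNIV :: 'c set)}"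
  proof -
    have "{Imp (Req R (Vr z) T) (BigConj {subst z c \<alpha> | c. c \<in> T}) | T. T \<subseteq> (UNIV :: 'c set)}
       = (\<lambda>T. Imp (Req R (Vr z) T) (BigConj {subst z c \<alpha> | c. c \<in> T})) ` Pow UNIV" by auto
    then show ?thesis by simp
  qed
  have fc: "finite {g c | c. c \<in> T}" for g :: "'c \<Rightarrow> ('p,'c) fm" and T
    by (rule fin[of _ g]) auto
  have fc2: "finite {g c | c. c \<notin> T}" for g :: "'c \<Rightarrow> ('p,'c) fm" and T
    by (rule fin[of _ g]) auto
  have req0: "sat M \<sigma> (Req R (Vr z) T) \<longleftrightarrow>
      (\<forall>t\<in>T. (\<sigma> z, IC M t) \<in> Rrel R M) \<and> (\<forall>t. t \<notin> T \<longrightarrow> (\<sigma> z, IC M t) \<notin> Rrel R M)" for \<sigma> T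
  proof -
    have "sat M \<sigma> (Req R (Vr z) T) \<longleftrightarrow>
      (\<forall>\<phi>\<in>{Atom R [Vr z, Con t] | t. t \<in> T}. sat M \<sigma> \<phi>) \<and>
      (\<forall>\<phi>\<in>{Neg (Atom R [Vr z, Con t]) | t. t \<notin> T}. sat M \<sigma> \<phi>)"
      unfolding Req_def sat.simps by (simp only: sat_BigConj fc fc2)
    also have "\<dots> \<longleftrightarrow> (\<forall>t\<in>T. (\<sigma> z, IC M t) \<in> Rrel R M) \<and> (\<forall>t. t \<notin> T \<longrightarrow> (\<sigma> z, IC M t) \<notin> Rrel R M)"
      by (auto simp: Rrel_def)
    finally show ?thesis .
  qed
  have req: "sat M \<sigma> (Req R (Vr z) T) \<longleftrightarrow> T = {t. (\<sigma> z, IC M t) \<in> Rrel R M}" for \<sigma> T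
    unfolding req0 by blast
  have L1: "sat M \<sigma>1 (BigConj {Imp (Req R (Vr z) T) (BigConj {subst z c \<alpha> | c. c \<in> T}) | T. T \<subseteq> UNIV})
     \<longleftrightarrow> (\<forall>T. sat M \<sigma>1 (Req R (Vr z) T) \<longrightarrow> (\<forall>c\<in>T. sat M \<sigma>1 (subst z c \<alpha>)))"
  proof -
    have "sat M \<sigma>1 (BigConj {Imp (Req R (Vr z) T) (BigConj {subst z c \<alpha> | c. c \<in> T}) | T. T \<subseteq> UNIV})
      \<longleftrightarrow> (\<forall>\<phi>\<in>{Imp (Req R (Vr z) T) (BigConj {subst z c \<alpha> | c. c \<in> T}) | T. T \<subseteq> UNIV}. sat M \<sigma>1 \<phi>)"
      by (simp only: sat_BigConj fin2)
    also have "\<dots> \<longleftrightarrow> (\<forall>T. sat M \<sigma>1 (Imp (Req R (Vr z) T) (BigConj {subst z c \<alpha> | c. c \<in> T})))"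
      by blast
    also have "\<dots> \<longleftrightarrow> (\<forall>T. sat M \<sigma>1 (Req R (Vr z) T) \<longrightarrow> (\<forall>\<phi>\<in>{subst z c \<alpha> | c. c \<in> T}. sat M \<sigma>1 \<phi>))"
      by (simp only: Imp_def sat.simps sat_BigConj fc) blast
    also have "\<dots> \<longleftrightarrow> (\<forall>T. sat M \<sigma>1 (Req R (Vr z) T) \<longrightarrow> (\<forall>c\<in>T. sat M \<sigma>1 (subst z c \<alpha>)))"
      by blast
    finally show ?thesis .
  qed
  have L: "sat M \<sigma>1 (BigConj {Imp (Req R (Vr z) T) (BigConj {subst z c \<alpha> | c. c \<in> T}) | T. T \<subseteq> UNIV})
     \<longleftrightarrow> (\<forall>c. (\<sigma>1 z, IC M c) \<in> Rrel R M \<longrightarrow> sat M (\<sigma>1(z := IC M c)) \<alpha>)"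
    unfolding L1 req sat_subst by blast
  have dom: "\<exists>c. b = IC M c" if ab: "(a, b) \<in> Rrel R M" for a b
  proof -
    have ip: "\<forall>P. \<forall>ds \<in> IP M P. length ds = ar P \<and> set ds \<subseteq> Dom M" and rg: "Dom M = range (IC M)"
      using assms(1) unfolding is_model_def by blast+
    have "[a, b] \<in> IP M R" using ab unfolding Rrel_def by simp
    then have "set [a, b] \<subseteq> Dom M" using ip by blast
    then have "b \<in> Dom M" by simp
    then show ?thesis using rg by auto
  qed
  have ot: "v \<noteq> z \<Longrightarrow> v = other z" for v
    by (cases v; cases z) (auto simp: other_def)
  have eq: "\<sigma>2 = \<sigma>1(z := \<sigma>2 z)" if "\<sigma>1 (other z) = \<sigma>2 (other z)" for \<sigma>2
    using that ot by (auto simp: fun_eq_iff) 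
  have oz: "other z \<noteq> z" by (cases z) (auto simp: other_def)
  show ?thesis
    unfolding L sat_upd
  proof
    assume H: "\<forall>c. (\<sigma>1 z, IC M c) \<in> Rrel R M \<longrightarrow> sat M (\<sigma>1(z := IC M c)) \<alpha>"
    show "\<forall>\<sigma>2\<in>Rz R M z {\<sigma>1}. sat M \<sigma>2 \<alpha>"
    proof
      fix \<sigma>2 assume "\<sigma>2 \<in> Rz R M z {\<sigma>1}"
      then have a: "(\<sigma>1 z, \<sigma>2 z) \<in> Rrel R M" and b: "\<sigma>1 (other z) = \<sigma>2 (other z)"
        by (auto simp: Rz_def)
      obtain c where c: "\<sigma>2 z = IC M c" using dom[OF a] by blast
      have "sat M (\<sigma>1(z := IC M c)) \<alpha>" using H a c by auto
      then show "sat M \<sigma>2 \<alpha>" using eq[of \<sigma>2, OF b] c by simp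
    qed
  next
    assume H: "\<forall>\<sigma>2\<in>Rz R M z {\<sigma>1}. sat M \<sigma>2 \<alpha>"
    show "\<forall>c. (\<sigma>1 z, IC M c) \<in> Rrel R M \<longrightarrow> sat M (\<sigma>1(z := IC M c)) \<alpha>"
    proof (intro allI impI)
      fix c assume "(\<sigma>1 z, IC M c) \<in> Rrel R M"
      then have "\<sigma>1(z := IC M c) \<in> Rz R M z {\<sigma>1}" using oz by (auto simp: Rz_def)
      then show "sat M (\<sigma>1(z := IC M c)) \<alpha>" using H by blast
    qed
  qed
qed

end
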